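(* Let $R$ be a commutative ring with identity and $I$ an ideal of $R$. Then the amalgamated duplication $R\bowtie I$ is a pm-ring if and only if $R$ is a pm-ring.
   Context: $R\bowtie I:=\{(r,r+i)\mid r\in R,\ i\in I\}$, a subring of $R\times R$. A commutative ring is a pm-ring if every prime ideal is contained in a unique maximal ideal. *)

theory Defs
  imports "HOL-Algebra.Algebra"
begin

definition amalg_dup :: "('a, 'm) ring_scheme \<Rightarrow> 'a set \<Rightarrow> ('a \<times> 'a) ring" where
  "amalg_dup R I = (RDirProd R R)
     \<lparr>carrier := {(r, r \<oplus>\<^bsub>R\<^esub> i) | r i. r \<in> carrier R \<and> i \<in> I}\<rparr>"

definition pm_ring :: "('a, 'm) ring_scheme \<Rightarrow> bool" where
  "pm_ring R \<longleftrightarrow> (\<forall>P. primeideal P R \<longrightarrow> (\<exists>!M. maximalideal M R \<and> P \<subseteq> M))"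

end

theory Submission
  imports Defs
begin

lemma D_carrier: "carrier (amalg_dup R I) = {(r, r \<oplus>\<^bsub>R\<^esub> i) | r i. r \<in> carrier R \<and> i \<in> I}"
  by (simp add: amalg_dup_def)
lemma D_mult: "x \<otimes>\<^bsub>amalg_dup R I\<^esub> y = (fst x \<otimes>\<^bsub>R\<^esub> fst y, snd x \<otimes>\<^bsub>R\<^esub> snd y)"
  by (simp add: amalg_dup_def RDirProd_def DirProd_def monoid.defs case_prod_beta)
lemma D_add: "x \<oplus>\<^bsub>amalg_dup R I\<^esub> y = (fst x \<oplus>\<^bsub>R\<^esub> fst y, snd x \<oplus>\<^bsub>R\<^esub> snd y)"
  by (simp add: amalg_dup_def RDirProd_def DirProd_def monoid.defs case_prod_beta)
lemma D_one: "\<one>\<^bsub>amalg_dup R I\<^esub> = (\<one>\<^bsub>R\<^esub>, \<one>\<^bsub>R\<^esub>)"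
  by (simp add: amalg_dup_def RDirProd_def DirProd_def monoid.defs)
lemma D_zero: "\<zero>\<^bsub>amalg_dup R I\<^esub> = (\<zero>\<^bsub>R\<^esub>, \<zero>\<^bsub>R\<^esub>)"
  by (simp add: amalg_dup_def RDirProd_def DirProd_def monoid.defs)
lemma D_sub: "amalg_dup R I = (RDirProd R R)\<lparr>carrier := carrier (amalg_dup R I)\<rparr>"
  by (simp add: amalg_dup_def)

lemma D_memI: "r \<in> carrier R \<Longrightarrow> i \<in> I \<Longrightarrow> (r, r \<oplus>\<^bsub>R\<^esub> i) \<in> carrier (amalg_dup R I)"
  unfolding D_carrier by blast
lemma D_memE: "x \<in> carrier (amalg_dup R I) \<Longrightarrow> (\<And>r i. x = (r, r \<oplus>\<^bsub>R\<^esub> i) \<Longrightarrow> r \<in> carrier R \<Longrightarrow> i \<in> I \<Longrightarrow> P) \<Longrightarrow> P"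
  unfolding D_carrier by blast

lemma D_cring:
  assumes "cring R" "ideal I R"
  shows "cring (amalg_dup R I)"
proof -
  interpret R: cring R by fact
  interpret I: ideal I R by fact
  have rP: "ring (RDirProd R R)" using RDirProd_ring R.ring_axioms by blast
  interpret P: ring "RDirProd R R" by fact
  have PC: "carrier (RDirProd R R) = carrier R \<times> carrier R" by (rule RDirProd_carrier)
  have PM: "\<And>x y. x \<otimes>\<^bsub>RDirProd R R\<^esub> y = (fst x \<otimes>\<^bsub>R\<^esub> fst y, snd x \<otimes>\<^bsub>R\<^esub> snd y)"
    by (simp add: RDirProd_def DirProd_def monoid.defs case_prod_beta)
  have PA: "\<And>x y. x \<oplus>\<^bsub>RDirProd R R\<^esub> y = (fst x \<oplus>\<^bsub>R\<^esub> fst y, snd x \<oplus>\<^bsub>R\<^esub> snd y)"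
    by (simp add: RDirProd_def DirProd_def monoid.defs case_prod_beta)
  have PO: "\<one>\<^bsub>RDirProd R R\<^esub> = (\<one>\<^bsub>R\<^esub>, \<one>\<^bsub>R\<^esub>)"
    by (simp add: RDirProd_def DirProd_def monoid.defs)
  have PZ: "\<zero>\<^bsub>RDirProd R R\<^esub> = (\<zero>\<^bsub>R\<^esub>, \<zero>\<^bsub>R\<^esub>)"
    by (simp add: RDirProd_def DirProd_def monoid.defs)
  have PN: "\<And>x. x \<in> carrier R \<times> carrier R \<Longrightarrow> \<ominus>\<^bsub>RDirProd R R\<^esub> x = (\<ominus>\<^bsub>R\<^esub> fst x, \<ominus>\<^bsub>R\<^esub> snd x)"
  proof -
    fix x assume x: "x \<in> carrier R \<times> carrier R"
    have "(\<ominus>\<^bsub>R\<^esub> fst x, \<ominus>\<^bsub>R\<^esub> snd x) \<oplus>\<^bsub>RDirProd R R\<^esub> x = \<zero>\<^bsub>RDirProd R R\<^esub>"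
    proof -
      obtain a b where ab: "x = (a, b)" "a \<in> carrier R" "b \<in> carrier R" using x by blast
      show ?thesis unfolding ab(1) PA PZ fst_conv snd_conv using ab(2,3) R.l_neg by simp
    qed
    moreover have "x \<in> carrier (RDirProd R R)" unfolding PC by (rule x)
    moreover have "(\<ominus>\<^bsub>R\<^esub> fst x, \<ominus>\<^bsub>R\<^esub> snd x) \<in> carrier (RDirProd R R)"
      using x unfolding PC mem_Times_iff fst_conv snd_conv by (blast intro: R.a_inv_closed)
    ultimately show "\<ominus>\<^bsub>RDirProd R R\<^esub> x = (\<ominus>\<^bsub>R\<^esub> fst x, \<ominus>\<^bsub>R\<^esub> snd x)"
      by (rule P.minus_equality)
  qed
  have sub: "subring (carrier (amalg_dup R I)) (RDirProd R R)"
  proof (rule P.subringI)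
    show "carrier (amalg_dup R I) \<subseteq> carrier (RDirProd R R)"
    proof
      fix x assume "x \<in> carrier (amalg_dup R I)"
      then obtain r i where "x = (r, r \<oplus>\<^bsub>R\<^esub> i)" "r \<in> carrier R" "i \<in> I" by (rule D_memE)
      then show "x \<in> carrier (RDirProd R R)" unfolding PC using I.Icarr R.a_closed by blast
    qed
    show "\<one>\<^bsub>RDirProd R R\<^esub> \<in> carrier (amalg_dup R I)"
    proof -
      have "\<one>\<^bsub>R\<^esub> = \<one>\<^bsub>R\<^esub> \<oplus>\<^bsub>R\<^esub> \<zero>\<^bsub>R\<^esub>" by (rule R.r_zero[symmetric]) (rule R.one_closed)
      moreover have "(\<one>\<^bsub>R\<^esub>, \<one>\<^bsub>R\<^esub> \<oplus>\<^bsub>R\<^esub> \<zero>\<^bsub>R\<^esub>) \<in> carrier (amalg_dup R I)"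
        by (rule D_memI[OF R.one_closed I.zero_closed])
      ultimately show ?thesis unfolding PO by simp
    qed
  next
    fix h assume "h \<in> carrier (amalg_dup R I)"
    then obtain r i where h: "h = (r, r \<oplus>\<^bsub>R\<^esub> i)" "r \<in> carrier R" "i \<in> I" by (rule D_memE)
    have ic: "i \<in> carrier R" using h I.Icarr by blast
    have hc: "h \<in> carrier R \<times> carrier R" using h ic by (blast intro: R.a_closed)
    have e: "\<ominus>\<^bsub>RDirProd R R\<^esub> h = (\<ominus>\<^bsub>R\<^esub> r, \<ominus>\<^bsub>R\<^esub> r \<oplus>\<^bsub>R\<^esub> \<ominus>\<^bsub>R\<^esub> i)"
    proof -
      have "\<ominus>\<^bsub>RDirProd R R\<^esub> h = (\<ominus>\<^bsub>R\<^esub> fst h, \<ominus>\<^bsub>R\<^esub> snd h)" by (rule PN[OF hc])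
      also have "\<dots> = (\<ominus>\<^bsub>R\<^esub> r, \<ominus>\<^bsub>R\<^esub> (r \<oplus>\<^bsub>R\<^esub> i))" by (simp only: h(1) fst_conv snd_conv)
      also have "\<dots> = (\<ominus>\<^bsub>R\<^esub> r, \<ominus>\<^bsub>R\<^esub> r \<oplus>\<^bsub>R\<^esub> \<ominus>\<^bsub>R\<^esub> i)" by (simp only: R.minus_add[OF h(2) ic])
      finally show ?thesis .
    qed
    have "\<ominus>\<^bsub>R\<^esub> i \<in> I" using h(3) by (rule I.a_inv_closed)
    then show "\<ominus>\<^bsub>RDirProd R R\<^esub> h \<in> carrier (amalg_dup R I)"
      unfolding e by (rule D_memI[OF R.a_inv_closed[OF h(2)]])
  next
    fix h1 h2 assume h1: "h1 \<in> carrier (amalg_dup R I)" and h2: "h2 \<in> carrier (amalg_dup R I)"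
    obtain r i where h13: "h1 = (r, r \<oplus>\<^bsub>R\<^esub> i)" "r \<in> carrier R" "i \<in> I" using h1 by (rule D_memE)
    obtain s j where h46: "h2 = (s, s \<oplus>\<^bsub>R\<^esub> j)" "s \<in> carrier R" "j \<in> I" using h2 by (rule D_memE)
    note h = h13 h46
    have ic: "i \<in> carrier R" "j \<in> carrier R" using h I.Icarr by blast+
    have sj: "s \<oplus>\<^bsub>R\<^esub> j \<in> carrier R" using h(5) ic(2) by (rule R.a_closed)
    have e1: "(r \<oplus>\<^bsub>R\<^esub> i) \<otimes>\<^bsub>R\<^esub> (s \<oplus>\<^bsub>R\<^esub> j) = r \<otimes>\<^bsub>R\<^esub> s \<oplus>\<^bsub>R\<^esub> (r \<otimes>\<^bsub>R\<^esub> j \<oplus>\<^bsub>R\<^esub> i \<otimes>\<^bsub>R\<^esub> (s \<oplus>\<^bsub>R\<^esub> j))"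
    proof -
      have "(r \<oplus>\<^bsub>R\<^esub> i) \<otimes>\<^bsub>R\<^esub> (s \<oplus>\<^bsub>R\<^esub> j) = r \<otimes>\<^bsub>R\<^esub> (s \<oplus>\<^bsub>R\<^esub> j) \<oplus>\<^bsub>R\<^esub> i \<otimes>\<^bsub>R\<^esub> (s \<oplus>\<^bsub>R\<^esub> j)"
        by (rule R.l_distr[OF h(2) ic(1) sj])
      also have "\<dots> = (r \<otimes>\<^bsub>R\<^esub> s \<oplus>\<^bsub>R\<^esub> r \<otimes>\<^bsub>R\<^esub> j) \<oplus>\<^bsub>R\<^esub> i \<otimes>\<^bsub>R\<^esub> (s \<oplus>\<^bsub>R\<^esub> j)"
        by (simp only: R.r_distr[OF h(5) ic(2) h(2)])
      also have "\<dots> = r \<otimes>\<^bsub>R\<^esub> s \<oplus>\<^bsub>R\<^esub> (r \<otimes>\<^bsub>R\<^esub> j \<oplus>\<^bsub>R\<^esub> i \<otimes>\<^bsub>R\<^esub> (s \<oplus>\<^bsub>R\<^esub> j))"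
        by (rule R.a_assoc[OF R.m_closed[OF h(2,5)] R.m_closed[OF h(2) ic(2)] R.m_closed[OF ic(1) sj]])
      finally show ?thesis .
    qed
    have k: "r \<otimes>\<^bsub>R\<^esub> j \<oplus>\<^bsub>R\<^esub> i \<otimes>\<^bsub>R\<^esub> (s \<oplus>\<^bsub>R\<^esub> j) \<in> I"
      by (rule I.a_closed[OF I.I_l_closed[OF h(6) h(2)] I.I_r_closed[OF h(3) sj]])
    show "h1 \<otimes>\<^bsub>RDirProd R R\<^esub> h2 \<in> carrier (amalg_dup R I)"
      unfolding PM h(1,4) fst_conv snd_conv e1 by (rule D_memI[OF R.m_closed[OF h(2,5)] k])
    have e2: "(r \<oplus>\<^bsub>R\<^esub> i) \<oplus>\<^bsub>R\<^esub> (s \<oplus>\<^bsub>R\<^esub> j) = (r \<oplus>\<^bsub>R\<^esub> s) \<oplus>\<^bsub>R\<^esub> (i \<oplus>\<^bsub>R\<^esub> j)"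
    proof -
      have "(r \<oplus>\<^bsub>R\<^esub> i) \<oplus>\<^bsub>R\<^esub> (s \<oplus>\<^bsub>R\<^esub> j) = r \<oplus>\<^bsub>R\<^esub> (i \<oplus>\<^bsub>R\<^esub> (s \<oplus>\<^bsub>R\<^esub> j))"
        by (rule R.a_assoc[OF h(2) ic(1) sj])
      also have "\<dots> = r \<oplus>\<^bsub>R\<^esub> (s \<oplus>\<^bsub>R\<^esub> (i \<oplus>\<^bsub>R\<^esub> j))"
        by (simp only: R.a_lcomm[OF ic(1) h(5) ic(2)])
      also have "\<dots> = (r \<oplus>\<^bsub>R\<^esub> s) \<oplus>\<^bsub>R\<^esub> (i \<oplus>\<^bsub>R\<^esub> j)"
        by (rule R.a_assoc[OF h(2,5) R.a_closed[OF ic], symmetric])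
      finally show ?thesis .
    qed
    show "h1 \<oplus>\<^bsub>RDirProd R R\<^esub> h2 \<in> carrier (amalg_dup R I)"
      unfolding PA h(1,4) fst_conv snd_conv e2 by (rule D_memI[OF R.a_closed[OF h(2,5)] I.a_closed[OF h(3,6)]])
  qed
  have rD: "ring (amalg_dup R I)"
    using P.subring_is_ring[OF sub[unfolded D_carrier]] unfolding amalg_dup_def .
  interpret D: ring "amalg_dup R I" by fact
  show ?thesis
  proof (intro cring.intro rD comm_monoid.intro D.monoid_axioms comm_monoid_axioms.intro)
    fix x y assume "x \<in> carrier (amalg_dup R I)" "y \<in> carrier (amalg_dup R I)"
    then have "x \<in> carrier R \<times> carrier R" "y \<in> carrier R \<times> carrier R" using sub unfolding PC[symmetric]
      by (blast dest: subringE(1))+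
    then show "x \<otimes>\<^bsub>amalg_dup R I\<^esub> y = y \<otimes>\<^bsub>amalg_dup R I\<^esub> x"
      unfolding D_mult mem_Times_iff using R.m_comm by metis
  qed
qed
locale sh = ring_hom_cring R S h for R (structure) and S (structure) and h +
  assumes surj: "h ` carrier R = carrier S"
begin

definition pre :: "'c set \<Rightarrow> 'a set" where "pre J = {r \<in> carrier R. h r \<in> J}"
definition kr :: "'a set" where "kr = pre {\<zero>\<^bsub>S\<^esub>}"

lemma pre_ideal: "ideal J S \<Longrightarrow> ideal (pre J) R"
  unfolding pre_def by (rule ring.ideal_vimage)

lemma pre_prime: "primeideal J S \<Longrightarrow> primeideal (pre J) R"
  unfolding pre_def by (rule ring.primeideal_vimage[OF R.is_cring])

lemma kr_sub: assumes "ideal J S" shows "kr \<subseteq> pre J"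
proof -
  have "\<zero>\<^bsub>S\<^esub> \<in> J" by (rule additive_subgroup.zero_closed[OF ideal.axioms(1)[OF assms]])
  then show ?thesis unfolding kr_def pre_def by auto
qed

lemma img_pre: "J \<subseteq> carrier S \<Longrightarrow> h ` (pre J) = J"
proof
  show "h ` pre J \<subseteq> J" unfolding pre_def by blast
  assume J: "J \<subseteq> carrier S"
  show "J \<subseteq> h ` pre J"
  proof
    fix y assume y: "y \<in> J"
    then have "y \<in> h ` carrier R" using J surj by blast
    then obtain x where "x \<in> carrier R" "y = h x" by blast
    then show "y \<in> h ` pre J" unfolding pre_def using y by blast
  qed
qed

lemma img_ideal:
  assumes K: "ideal K R"
  shows "ideal (h ` K) S"
proof (rule idealI[OF S.ring_axioms])
  interpret K: ideal K R by fact
  show "subgroup (h ` K) (add_monoid S)"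
    by (rule ring.img_is_add_subgroup[OF K.a_subgroup])
next
  interpret K: ideal K R by fact
  fix a x assume a: "a \<in> h ` K" and x: "x \<in> carrier S"
  obtain k where k: "k \<in> K" "a = h k" using a by blast
  have "x \<in> h ` carrier R" using x surj by simp
  then obtain y where y: "y \<in> carrier R" "x = h y" by blast
  have kc: "k \<in> carrier R" using k(1) K.Icarr by blast
  have "x \<otimes>\<^bsub>S\<^esub> a = h (y \<otimes> k)" using y kc k by simp
  moreover have "y \<otimes> k \<in> K" by (rule K.I_l_closed[OF k(1) y(1)])
  ultimately show "x \<otimes>\<^bsub>S\<^esub> a \<in> h ` K" by blast
  have "a \<otimes>\<^bsub>S\<^esub> x = h (k \<otimes> y)" using y kc k by simp
  moreover have "k \<otimes> y \<in> K" by (rule K.I_r_closed[OF k(1) y(1)])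
  ultimately show "a \<otimes>\<^bsub>S\<^esub> x \<in> h ` K" by blast
qed

lemma pre_img:
  assumes K: "ideal K R" and kr: "kr \<subseteq> K"
  shows "pre (h ` K) = K"
proof
  interpret K: ideal K R by fact
  show "K \<subseteq> pre (h ` K)" unfolding pre_def using K.Icarr by blast
  show "pre (h ` K) \<subseteq> K"
  proof
    fix r assume "r \<in> pre (h ` K)"
    then have r: "r \<in> carrier R" and "h r \<in> h ` K" unfolding pre_def by auto
    then obtain k where k: "k \<in> K" "h r = h k" by blast
    have kc: "k \<in> carrier R" using k(1) K.Icarr by blast
    have nk: "\<ominus> k \<in> carrier R" using kc by (rule R.a_inv_closed)
    have "h (r \<oplus> \<ominus> k) = h k \<oplus>\<^bsub>S\<^esub> \<ominus>\<^bsub>S\<^esub> h k"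
      using r nk kc k(2) by simp
    also have "\<dots> = \<zero>\<^bsub>S\<^esub>" by (rule S.r_neg) (rule hom_closed[OF kc])
    finally have "r \<oplus> \<ominus> k \<in> kr" unfolding kr_def pre_def using r nk by simp
    then have d: "r \<oplus> \<ominus> k \<in> K" using kr by blast
    have "r = (r \<oplus> \<ominus> k) \<oplus> k"
      using r kc nk by (simp add: R.a_assoc R.l_neg)
    then show "r \<in> K" using K.a_closed[OF d k(1)] by simp
  qed
qed

lemma pre_max:
  assumes J: "maximalideal J S"
  shows "maximalideal (pre J) R"
proof -
  interpret J: maximalideal J S by fact
  have Ji: "ideal J S" by (rule J.is_ideal)
  have Jc: "J \<subseteq> carrier S" using J.Icarr by blast
  show ?thesis
  proof (rule maximalidealI[OF pre_ideal[OF Ji]])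
    show "carrier R \<noteq> pre J"
    proof
      assume "carrier R = pre J"
      then have "h ` carrier R = J" using img_pre[OF Jc] by simp
      then show False using surj J.I_notcarr by simp
    qed
  next
    fix K assume K: "ideal K R" "pre J \<subseteq> K" "K \<subseteq> carrier R"
    interpret K: ideal K R by fact
    have krK: "kr \<subseteq> K" using kr_sub[OF Ji] K(2) by blast
    have "J \<subseteq> h ` K" using img_pre[OF Jc] K(2) by blast
    then have "h ` K = J \<or> h ` K = carrier S"
      using J.I_maximal[OF img_ideal[OF K(1)]] K(3) surj by blast
    then show "K = pre J \<or> K = carrier R"
    proof
      assume "h ` K = J"
      then show ?thesis using pre_img[OF K(1) krK] by simp
    next
      assume "h ` K = carrier S"
      then obtain k where k: "k \<in> K" "h k = \<one>\<^bsub>S\<^esub>" using S.one_closed by (metis imageE)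
      have kc: "k \<in> carrier R" using k(1) K.Icarr by blast
      have "h (\<one> \<oplus> \<ominus> k) = \<zero>\<^bsub>S\<^esub>" using kc k(2) S.r_neg[OF S.one_closed] by simp
      moreover have "\<zero>\<^bsub>S\<^esub> \<in> J" by (rule J.zero_closed)
      moreover have "\<one> \<oplus> \<ominus> k \<in> carrier R" using kc by simp
      ultimately have "\<one> \<oplus> \<ominus> k \<in> pre J" unfolding pre_def by simp
      then have "\<one> \<oplus> \<ominus> k \<in> K" using K(2) by blast
      then have "(\<one> \<oplus> \<ominus> k) \<oplus> k \<in> K" using K.a_closed k(1) by blast
      moreover have "(\<one> \<oplus> \<ominus> k) \<oplus> k = \<one>" using kc by (simp add: R.a_assoc R.l_neg)
      ultimately have "\<one> \<in> K" by simp
      then show ?thesis using K.one_imp_carrier by blast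
    qed
  qed
qed

lemma img_max:
  assumes K: "maximalideal K R" and kr: "kr \<subseteq> K"
  shows "maximalideal (h ` K) S"
proof -
  interpret K: maximalideal K R by fact
  have Ki: "ideal K R" by (rule K.is_ideal)
  show ?thesis
  proof (rule maximalidealI[OF img_ideal[OF Ki]])
    show "carrier S \<noteq> h ` K"
    proof
      assume "carrier S = h ` K"
      then have "pre (carrier S) = K" using pre_img[OF Ki kr] by simp
      moreover have "pre (carrier S) = carrier R" unfolding pre_def by auto
      ultimately show False using K.I_notcarr by simp
    qed
  next
    fix J assume J: "ideal J S" "h ` K \<subseteq> J" "J \<subseteq> carrier S"
    have "K \<subseteq> pre J" unfolding pre_def using J(2) K.Icarr by blast
    then have "pre J = K \<or> pre J = carrier R"
      using K.I_maximal[OF pre_ideal[OF J(1)]] unfolding pre_def by blast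
    then show "J = h ` K \<or> J = carrier S"
      using img_pre[OF J(3)] surj by metis
  qed
qed

lemma img_prime:
  assumes K: "primeideal K R" and kr: "kr \<subseteq> K"
  shows "primeideal (h ` K) S"
proof -
  interpret K: primeideal K R by fact
  have Ki: "ideal K R" by (rule K.is_ideal)
  show ?thesis
  proof (rule primeidealI[OF img_ideal[OF Ki] S.is_cring])
    show "carrier S \<noteq> h ` K"
    proof
      assume "carrier S = h ` K"
      then have "pre (carrier S) = K" using pre_img[OF Ki kr] by simp
      moreover have "pre (carrier S) = carrier R" unfolding pre_def by auto
      ultimately show False using K.I_notcarr by simp
    qed
  next
    fix a b assume a: "a \<in> carrier S" and b: "b \<in> carrier S" and ab: "a \<otimes>\<^bsub>S\<^esub> b \<in> h ` K"
    obtain x where x: "x \<in> carrier R" "a = h x" using a surj by (metis imageE)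
    obtain y where y: "y \<in> carrier R" "b = h y" using b surj by (metis imageE)
    have "h (x \<otimes> y) \<in> h ` K" using ab x y by simp
    then have "x \<otimes> y \<in> pre (h ` K)" unfolding pre_def using x y by simp
    then have "x \<otimes> y \<in> K" using pre_img[OF Ki kr] by simp
    then have "x \<in> K \<or> y \<in> K" using K.I_prime x(1) y(1) by blast
    then show "a \<in> h ` K \<or> b \<in> h ` K"
    proof
      assume "x \<in> K" then have "a \<in> h ` K" unfolding x(2) by (rule imageI)
      then show ?thesis ..
    next
      assume "y \<in> K" then have "b \<in> h ` K" unfolding y(2) by (rule imageI)
      then show ?thesis ..
    qed
  qed
qed

lemma pm_down:
  assumes pm: "pm_ring R" shows "pm_ring S"
  unfolding pm_ring_def
proof (intro allI impI)
  fix P assume P: "primeideal P S"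
  have Pi: "ideal P S" by (rule primeideal.axioms(1)[OF P])
  have Pc: "P \<subseteq> carrier S" using ideal.Icarr[OF Pi] by (rule subsetI)
  have Q: "primeideal (pre P) R" by (rule pre_prime[OF P])
  have "\<exists>!M. maximalideal M R \<and> pre P \<subseteq> M" using pm Q unfolding pm_ring_def by blast
  then obtain M where M: "maximalideal M R" "pre P \<subseteq> M" by (metis (no_types, lifting))
  have Mi: "ideal M R" by (rule maximalideal.axioms(1)[OF M(1)])
  have krM: "kr \<subseteq> M" using kr_sub[OF Pi] M(2) by (rule order_trans)
  have PhM: "P \<subseteq> h ` M" using img_pre[OF Pc] M(2) by (metis image_mono)
  show "\<exists>!N. maximalideal N S \<and> P \<subseteq> N"
  proof (rule ex1I[of _ "h ` M"])
    show "maximalideal (h ` M) S \<and> P \<subseteq> h ` M"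
      using img_max[OF M(1) krM] PhM by (rule conjI)
  next
    fix N assume N: "maximalideal N S \<and> P \<subseteq> N"
    have Ni: "ideal N S" using N maximalideal.axioms(1) by (metis (no_types, lifting))
    have Nc: "N \<subseteq> carrier S" using ideal.Icarr[OF Ni] by (rule subsetI)
    have "pre P \<subseteq> pre N" using N unfolding pre_def by auto
    then have A: "maximalideal (pre N) R \<and> pre P \<subseteq> pre N"
      using pre_max N by (metis (no_types, lifting))
    have B: "maximalideal (pre (h ` M)) R \<and> pre P \<subseteq> pre (h ` M)"
      unfolding pre_img[OF Mi krM] using M by (rule conjI)
    have "\<exists>!M. maximalideal M R \<and> pre P \<subseteq> M" using pm Q unfolding pm_ring_def by blast
    then have "pre N = pre (h ` M)" using A B by (metis (no_types, lifting))
    then have "h ` pre N = h ` pre (h ` M)" by (rule arg_cong)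
    then show "N = h ` M" unfolding img_pre[OF Nc] pre_img[OF Mi krM] .
  qed
qed

lemma pm_up:
  assumes pm: "pm_ring S" and Q: "primeideal Q R" and krQ: "kr \<subseteq> Q"
  shows "\<exists>!M. maximalideal M R \<and> Q \<subseteq> M"
proof -
  have Qi: "ideal Q R" by (rule primeideal.axioms(1)[OF Q])
  have P: "primeideal (h ` Q) S" by (rule img_prime[OF Q krQ])
  have ex: "\<exists>!M. maximalideal M S \<and> h ` Q \<subseteq> M" using pm P unfolding pm_ring_def by blast
  then obtain N where N: "maximalideal N S" "h ` Q \<subseteq> N" by (metis (no_types, lifting))
  have Qp: "pre (h ` Q) = Q" by (rule pre_img[OF Qi krQ])
  have "pre (h ` Q) \<subseteq> pre N" using N(2) unfolding pre_def by auto
  then have QN: "Q \<subseteq> pre N" unfolding Qp .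
  show ?thesis
  proof (rule ex1I[of _ "pre N"])
    show "maximalideal (pre N) R \<and> Q \<subseteq> pre N"
      using pre_max[OF N(1)] QN by (rule conjI)
  next
    fix M assume M: "maximalideal M R \<and> Q \<subseteq> M"
    have Mi: "ideal M R" using M maximalideal.axioms(1) by (metis (no_types, lifting))
    have krM: "kr \<subseteq> M" using krQ M by (metis (no_types, lifting) order_trans)
    have mM: "maximalideal (h ` M) S" using img_max[OF _ krM] M by (metis (no_types, lifting))
    have "h ` Q \<subseteq> h ` M" using M by (metis (no_types, lifting) image_mono)
    then have "h ` M = N" using ex mM N by (metis (no_types, lifting))
    then show "M = pre N" using pre_img[OF Mi krM] by (metis (no_types, lifting))
  qed
qed

end

lemma D_fst_hom:
  assumes "cring R" "ideal I R"
  shows "fst \<in> ring_hom (amalg_dup R I) R"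
proof (rule ring_hom_memI)
  interpret R: cring R by fact
  interpret I: ideal I R by fact
  fix x assume "x \<in> carrier (amalg_dup R I)"
  then obtain r i where "x = (r, r \<oplus>\<^bsub>R\<^esub> i)" "r \<in> carrier R" "i \<in> I" by (rule D_memE)
  then show "fst x \<in> carrier R" by simp
next
  fix x y show "fst (x \<otimes>\<^bsub>amalg_dup R I\<^esub> y) = fst x \<otimes>\<^bsub>R\<^esub> fst y" unfolding D_mult by simp
  show "fst (x \<oplus>\<^bsub>amalg_dup R I\<^esub> y) = fst x \<oplus>\<^bsub>R\<^esub> fst y" unfolding D_add by simp
next
  show "fst \<one>\<^bsub>amalg_dup R I\<^esub> = \<one>\<^bsub>R\<^esub>" unfolding D_one by simp
qed

lemma D_snd_hom:
  assumes "cring R" "ideal I R"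
  shows "snd \<in> ring_hom (amalg_dup R I) R"
proof (rule ring_hom_memI)
  interpret R: cring R by fact
  interpret I: ideal I R by fact
  fix x assume "x \<in> carrier (amalg_dup R I)"
  then obtain r i where x: "x = (r, r \<oplus>\<^bsub>R\<^esub> i)" "r \<in> carrier R" "i \<in> I" by (rule D_memE)
  have "i \<in> carrier R" using x(3) by (rule I.Icarr)
  then show "snd x \<in> carrier R" using x(1,2) by simp
next
  fix x y show "snd (x \<otimes>\<^bsub>amalg_dup R I\<^esub> y) = snd x \<otimes>\<^bsub>R\<^esub> snd y" unfolding D_mult by simp
  show "snd (x \<oplus>\<^bsub>amalg_dup R I\<^esub> y) = snd x \<oplus>\<^bsub>R\<^esub> snd y" unfolding D_add by simp
next
  show "snd \<one>\<^bsub>amalg_dup R I\<^esub> = \<one>\<^bsub>R\<^esub>" unfolding D_one by simp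
qed

lemma D_fst_surj:
  assumes "cring R" "ideal I R"
  shows "fst ` carrier (amalg_dup R I) = carrier R"
proof
  interpret R: cring R by fact
  interpret I: ideal I R by fact
  show "fst ` carrier (amalg_dup R I) \<subseteq> carrier R" using ring_hom_closed[OF D_fst_hom[OF assms]] by blast
  show "carrier R \<subseteq> fst ` carrier (amalg_dup R I)"
  proof
    fix r assume r: "r \<in> carrier R"
    have "(r, r \<oplus>\<^bsub>R\<^esub> \<zero>\<^bsub>R\<^esub>) \<in> carrier (amalg_dup R I)" by (rule D_memI[OF r I.zero_closed])
    then have "fst (r, r \<oplus>\<^bsub>R\<^esub> \<zero>\<^bsub>R\<^esub>) \<in> fst ` carrier (amalg_dup R I)" by (rule imageI)
    then show "r \<in> fst ` carrier (amalg_dup R I)" by simp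
  qed
qed

lemma D_snd_surj:
  assumes "cring R" "ideal I R"
  shows "snd ` carrier (amalg_dup R I) = carrier R"
proof
  interpret R: cring R by fact
  interpret I: ideal I R by fact
  show "snd ` carrier (amalg_dup R I) \<subseteq> carrier R" using ring_hom_closed[OF D_snd_hom[OF assms]] by blast
  show "carrier R \<subseteq> snd ` carrier (amalg_dup R I)"
  proof
    fix r assume r: "r \<in> carrier R"
    have "(r, r \<oplus>\<^bsub>R\<^esub> \<zero>\<^bsub>R\<^esub>) \<in> carrier (amalg_dup R I)" by (rule D_memI[OF r I.zero_closed])
    then have "snd (r, r \<oplus>\<^bsub>R\<^esub> \<zero>\<^bsub>R\<^esub>) \<in> snd ` carrier (amalg_dup R I)" by (rule imageI)
    then show "r \<in> snd ` carrier (amalg_dup R I)" using r by simp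
  qed
qed

lemma D_sh1: assumes "cring R" "ideal I R" shows "sh (amalg_dup R I) R fst"
  by (intro sh.intro ring_hom_cring.intro ring_hom_cring_axioms.intro sh_axioms.intro
      D_cring[OF assms] assms(1) D_fst_hom[OF assms] D_fst_surj[OF assms])

lemma D_sh2: assumes "cring R" "ideal I R" shows "sh (amalg_dup R I) R snd"
  by (intro sh.intro ring_hom_cring.intro ring_hom_cring_axioms.intro sh_axioms.intro
      D_cring[OF assms] assms(1) D_snd_hom[OF assms] D_snd_surj[OF assms])

theorem corollary3p5:
  fixes R :: "('a, 'm) ring_scheme" and I :: "'a set"
  assumes "cring R" and "ideal I R"
  shows "pm_ring (amalg_dup R I) \<longleftrightarrow> pm_ring R"
proof
  interpret F: sh "amalg_dup R I" R fst by (rule D_sh1[OF assms])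
  interpret G: sh "amalg_dup R I" R snd by (rule D_sh2[OF assms])
  assume "pm_ring (amalg_dup R I)"
  then show "pm_ring R" by (rule F.pm_down)
next
  interpret R: cring R by fact
  interpret F: sh "amalg_dup R I" R fst by (rule D_sh1[OF assms])
  interpret G: sh "amalg_dup R I" R snd by (rule D_sh2[OF assms])
  assume pm: "pm_ring R"
  show "pm_ring (amalg_dup R I)"
    unfolding pm_ring_def
  proof (intro allI impI)
    fix Q assume Q: "primeideal Q (amalg_dup R I)"
    interpret Q: primeideal Q "amalg_dup R I" by fact
    have "F.kr \<subseteq> Q \<or> G.kr \<subseteq> Q"
    proof (rule disjCI)
      assume "\<not> G.kr \<subseteq> Q"
      then obtain y where y: "y \<in> G.kr" "y \<notin> Q" by blast
      show "F.kr \<subseteq> Q"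
      proof
        fix x assume x: "x \<in> F.kr"
        have xc: "x \<in> carrier (amalg_dup R I)" and x0: "fst x = \<zero>\<^bsub>R\<^esub>"
          using x unfolding F.kr_def F.pre_def by auto
        have yc: "y \<in> carrier (amalg_dup R I)" and y0: "snd y = \<zero>\<^bsub>R\<^esub>"
          using y(1) unfolding G.kr_def G.pre_def by auto
        have fy: "fst y \<in> carrier R" using yc by (rule F.hom_closed)
        have sx: "snd x \<in> carrier R" using xc by (rule G.hom_closed)
        have "x \<otimes>\<^bsub>amalg_dup R I\<^esub> y = (\<zero>\<^bsub>R\<^esub>, \<zero>\<^bsub>R\<^esub>)"
          unfolding D_mult x0 y0 using fy sx by simp
        then have "x \<otimes>\<^bsub>amalg_dup R I\<^esub> y \<in> Q" using Q.zero_closed unfolding D_zero by simp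
        then have "x \<in> Q \<or> y \<in> Q" using Q.I_prime xc yc by blast
        then show "x \<in> Q" using y(2) by blast
      qed
    qed
    then show "\<exists>!M. maximalideal M (amalg_dup R I) \<and> Q \<subseteq> M"
    proof
      assume "F.kr \<subseteq> Q" then show ?thesis by (rule F.pm_up[OF pm Q])
    next
      assume "G.kr \<subseteq> Q" then show ?thesis by (rule G.pm_up[OF pm Q])
    qed
  qed
qed

end
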